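(* Let $\theta,\theta'$ be real antisymmetric $n\times n$ matrices and $l\ge 1$. Let $\bar C^l\subset C^l=\mathrm{Hom}(B^l(A_\theta),A_{\theta'}[1])$ be the subcomplex of normal cochains. Then $H^k(\bar C^l)=0$ for all $k>0$; in particular $H^1(\bar C^l)=0$.
   Context: For a real antisymmetric $n\times n$ matrix $\theta$, $A_\theta$ is the unital dg-algebra over $\mathbb{R}$ generated by $x^1,\dots,x^n$ (degree $0$) and $\xi^1,\dots,\xi^n$ (degree $1$) with relations $x^ix^j-x^jx^i=\theta^{ij}$, $x^i\xi^j=\xi^jx^i$, $\xi^i\xi^j=0$, and differential $dx^i=\xi^i$, $d\xi^i=0$ (graded Leibniz rule). As a vector space $A_\theta$ is the space of polynomials $a_0(x)+a_i(x)\xi^i$ in commuting $x$'s at most linear in the $\xi$'s. $A_\theta[1]$ is the degree shift ($A_\theta[1]_k=(A_\theta)_{k+1}$), $B^l(A_\theta)=A_\theta[1]^{\otimes l}$ carries the differential induced by $d$ (with Koszul signs), and $C^l=\bigoplus_k\mathrm{Hom}^k(B^l(A_\theta),A_{\theta'}[1])$, where $\mathrm{Hom}^k$ consists of linear maps raising degree by $k$, with differential $d_l(f)=f\circ d$. A cochain $f\in C^l$ is normal if $f(a_1,\dots,a_l)=0$ whenever some $a_i$ equals $1\in A_\theta$; normal cochains form a subcomplex $\bar C^l$. *)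

theory Defs
  imports Complex_Main
begin

text \<open>Elements of A_theta as a real vector space: a_0(x) + a_i(x) xi^i.
  An element a is stored by its coefficients: a None alpha is the coefficient of the
  monomial x^alpha in a_0, and a (Some i) alpha that of x^alpha in a_i (i < n).\<close>

type_synonym elt = "nat option \<Rightarrow> (nat \<Rightarrow> nat) \<Rightarrow> real"

definition antisym_mat :: "nat \<Rightarrow> (nat \<Rightarrow> nat \<Rightarrow> real) \<Rightarrow> bool" where
  "antisym_mat n th = (\<forall>i<n. \<forall>j<n. th i j = - th j i)"

definition Aset :: "nat \<Rightarrow> elt set" where
  "Aset n = {a. finite {(e, \<alpha>). a e \<alpha> \<noteq> 0} \<and>
     (\<forall>e \<alpha>. a e \<alpha> \<noteq> 0 \<longrightarrow> (\<forall>j\<ge>n. \<alpha> j = 0) \<and> (\<forall>i. e = Some i \<longrightarrow> i < n))}"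

definition zeroA :: elt where "zeroA = (\<lambda>e \<alpha>. 0)"
definition addA :: "elt \<Rightarrow> elt \<Rightarrow> elt" where "addA a b = (\<lambda>e \<alpha>. a e \<alpha> + b e \<alpha>)"
definition scaleA :: "real \<Rightarrow> elt \<Rightarrow> elt" where "scaleA c a = (\<lambda>e \<alpha>. c * a e \<alpha>)"

definition sumA :: "nat \<Rightarrow> (nat \<Rightarrow> elt) \<Rightarrow> elt" where
  "sumA m F = (\<lambda>e \<alpha>. \<Sum>i<m. F i e \<alpha>)"

definition unitA :: elt where
  "unitA = (\<lambda>e \<alpha>. if e = None \<and> \<alpha> = (\<lambda>_. 0) then 1 else 0)"

definition is_hom :: "elt \<Rightarrow> int \<Rightarrow> bool" where
  "is_hom a d = (if d = 0 then (\<forall>i \<alpha>. a (Some i) \<alpha> = 0)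
                 else if d = 1 then (\<forall>\<alpha>. a None \<alpha> = 0)
                 else a = zeroA)"

text \<open>Differential d(a_0 + a_i xi^i) = (d_j a_0) xi^j.\<close>
definition dA :: "nat \<Rightarrow> elt \<Rightarrow> elt" where
  "dA n a = (\<lambda>e \<alpha>. case e of None \<Rightarrow> 0
      | Some j \<Rightarrow> if j < n then real (Suc (\<alpha> j)) * a None (\<alpha>(j := Suc (\<alpha> j))) else 0)"

text \<open>Koszul sign for passing d across an element of A_theta[1]: (-1)^{|a|-1}.\<close>
definition sgnA :: "elt \<Rightarrow> elt" where
  "sgnA a = (\<lambda>e \<alpha>. if e = None then - a e \<alpha> else a e \<alpha>)"

text \<open>Cochains in Hom(B^l(A_theta), A_theta'[1]) are represented as multilinear maps
  on l-tuples (lists of length l) of elements.\<close>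
definition args :: "nat \<Rightarrow> nat \<Rightarrow> elt list set" where
  "args n l = {as. length as = l \<and> set as \<subseteq> Aset n}"

definition multilinear :: "nat \<Rightarrow> nat \<Rightarrow> (elt list \<Rightarrow> elt) \<Rightarrow> bool" where
  "multilinear n l f = (\<forall>as \<in> args n l. \<forall>i<l. \<forall>b \<in> Aset n. \<forall>c \<in> Aset n. \<forall>r s.
     f (as[i := addA (scaleA r b) (scaleA s c)]) =
       addA (scaleA r (f (as[i := b]))) (scaleA s (f (as[i := c]))))"

text \<open>Hom^k: multilinear maps raising degree by k, where A_theta[1]_m = (A_theta)_{m+1}.
  On homogeneous arguments of A_theta-degrees ds, the input has B^l-degree
  sum (d_i - 1), and the output must lie in A_theta'[1] in degree that plus k,
  i.e. in (A_theta')_{sum (d_i - 1) + k + 1}.\<close>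
definition cochain :: "nat \<Rightarrow> nat \<Rightarrow> int \<Rightarrow> (elt list \<Rightarrow> elt) \<Rightarrow> bool" where
  "cochain n l k f = ((\<forall>as \<in> args n l. f as \<in> Aset n) \<and> multilinear n l f \<and>
     (\<forall>as \<in> args n l. \<forall>ds. length ds = l \<and> set ds \<subseteq> {0, 1} \<and>
        (\<forall>i<l. is_hom (as ! i) (ds ! i)) \<longrightarrow>
        is_hom (f as) (sum_list ds - int l + k + 1)))"

definition normal :: "nat \<Rightarrow> nat \<Rightarrow> (elt list \<Rightarrow> elt) \<Rightarrow> bool" where
  "normal n l f = (\<forall>as \<in> args n l. unitA \<in> set as \<longrightarrow> f as = zeroA)"

text \<open>d_l(f) = f o d, d on B^l with Koszul signs.\<close>
definition dB :: "nat \<Rightarrow> (elt list \<Rightarrow> elt) \<Rightarrow> (elt list \<Rightarrow> elt)" where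
  "dB n f = (\<lambda>as. sumA (length as)
      (\<lambda>i. f (map sgnA (take i as) @ dA n (as ! i) # drop (Suc i) as)))"

end

theory Submission
  imports Defs
begin


definition hA :: "nat \<Rightarrow> elt \<Rightarrow> elt" where
  "hA n a = (\<lambda>e \<alpha>. case e of None \<Rightarrow>
      (\<Sum>j<n. if 0 < \<alpha> j then a (Some j) (\<alpha>(j := \<alpha> j - 1)) else 0) / real (\<Sum>j<n. \<alpha> j)
    | Some _ \<Rightarrow> 0)"

definition PA :: "nat \<Rightarrow> elt \<Rightarrow> elt" where
  "PA n a = (\<lambda>e \<alpha>. a e \<alpha> - dA n (hA n a) e \<alpha> - hA n (dA n a) e \<alpha>)"

definition QA :: "nat \<Rightarrow> elt \<Rightarrow> elt" where
  "QA n a = sgnA (PA n a)"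

lemma Aset_supp:
  assumes "a \<in> Aset n" "b \<in> Aset n" "\<forall>e \<alpha>. c e \<alpha> \<noteq> 0 \<longrightarrow> a e \<alpha> \<noteq> 0 \<or> b e \<alpha> \<noteq> 0"
  shows "c \<in> Aset n"
proof -
  have "{(e,\<alpha>). c e \<alpha> \<noteq> 0} \<subseteq> {(e,\<alpha>). a e \<alpha> \<noteq> 0} \<union> {(e,\<alpha>). b e \<alpha> \<noteq> 0}" using assms(3) by auto
  hence "finite {(e,\<alpha>). c e \<alpha> \<noteq> 0}" using assms(1,2) by (auto simp: Aset_def intro: finite_subset)
  thus ?thesis using assms unfolding Aset_def by blast
qed

lemma Aset_add[simp]: "a \<in> Aset n \<Longrightarrow> b \<in> Aset n \<Longrightarrow> addA a b \<in> Aset n"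
  by (rule Aset_supp[of a n b]) (auto simp: addA_def)

lemma Aset_scale[simp]: "a \<in> Aset n \<Longrightarrow> scaleA c a \<in> Aset n"
  by (rule Aset_supp[of a n a]) (auto simp: scaleA_def)

lemma Aset_sgn[simp]: "a \<in> Aset n \<Longrightarrow> sgnA a \<in> Aset n"
  by (rule Aset_supp[of a n a]) (auto simp: sgnA_def)

lemma Aset_zero[simp]: "zeroA \<in> Aset n"
  by (auto simp: Aset_def zeroA_def)

lemma Aset_unit[simp]: "unitA \<in> Aset n"
proof -
  have "{(e,\<alpha>). unitA e \<alpha> \<noteq> 0} \<subseteq> {(None, \<lambda>_. 0)}" by (auto simp: unitA_def split: if_splits)
  hence "finite {(e,\<alpha>). unitA e \<alpha> \<noteq> 0}" by (rule finite_subset) simp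
  thus ?thesis by (auto simp: Aset_def unitA_def split: if_splits)
qed

lemma Aset_sumA[simp]: "(\<And>i. i < m \<Longrightarrow> F i \<in> Aset n) \<Longrightarrow> sumA m F \<in> Aset n"
proof (induction m)
  case 0
  then show ?case by (simp add: sumA_def flip: zeroA_def)
next
  case (Suc m)
  have "sumA (Suc m) F = addA (sumA m F) (F m)" by (auto simp: sumA_def addA_def)
  then show ?case using Suc by simp
qed

lemma Aset_dA[simp]: assumes a: "a \<in> Aset n" shows "dA n a \<in> Aset n"
proof -
  let ?S = "{\<beta>. a None \<beta> \<noteq> 0}"
  have "?S \<subseteq> snd ` {(e,\<alpha>). a e \<alpha> \<noteq> 0}" by force
  have fa: "finite {(e,\<alpha>). a e \<alpha> \<noteq> 0}" using a by (simp add: Aset_def)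
  have fS: "finite ?S" by (rule finite_subset[OF \<open>?S \<subseteq> _\<close> finite_imageI[OF fa]])
  have "{(e,\<alpha>). dA n a e \<alpha> \<noteq> 0} \<subseteq> (\<lambda>(j,\<beta>). (Some j, \<beta>(j := \<beta> j - 1))) ` ({..<n} \<times> ?S)"
  proof (clarify)
    fix e \<alpha> assume "dA n a e \<alpha> \<noteq> 0"
    then obtain j where "e = Some j" "j<n" "a None (\<alpha>(j := Suc (\<alpha> j))) \<noteq> 0"
      by (auto simp: dA_def split: option.splits if_splits)
    then show "(e,\<alpha>) \<in> (\<lambda>(j,\<beta>). (Some j, \<beta>(j := \<beta> j - 1))) ` ({..<n} \<times> ?S)"
      by (intro image_eqI[where x="(j, \<alpha>(j := Suc (\<alpha> j)))"]) auto
  qed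
  moreover have "finite ((\<lambda>(j,\<beta>). (Some j, \<beta>(j := \<beta> j - 1))) ` ({..<n} \<times> ?S))"
    using fS by simp
  ultimately have fin: "finite {(e,\<alpha>). dA n a e \<alpha> \<noteq> 0}" by (rule finite_subset)
  have "\<forall>e \<alpha>. dA n a e \<alpha> \<noteq> 0 \<longrightarrow> (\<forall>j\<ge>n. \<alpha> j = 0) \<and> (\<forall>i. e = Some i \<longrightarrow> i < n)"
  proof (intro allI impI)
    fix e \<alpha> assume "dA n a e \<alpha> \<noteq> 0"
    then obtain j where j: "e = Some j" "j<n" "a None (\<alpha>(j := Suc (\<alpha> j))) \<noteq> 0"
      by (auto simp: dA_def split: option.splits if_splits)
    have "\<forall>j'\<ge>n. (\<alpha>(j := Suc (\<alpha> j))) j' = 0" using a j(3) unfolding Aset_def by blast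
    moreover have "\<forall>j'\<ge>n. j' \<noteq> j" using j(2) by auto
    ultimately show "(\<forall>j\<ge>n. \<alpha> j = 0) \<and> (\<forall>i. e = Some i \<longrightarrow> i < n)" using j
      by (auto split: if_splits)
  qed
  then show ?thesis using fin by (simp add: Aset_def)
qed

lemma hA_None: "hA n a None \<alpha> = (\<Sum>j<n. if 0 < \<alpha> j then a (Some j) (\<alpha>(j := \<alpha> j - 1)) else 0) / real (\<Sum>j<n. \<alpha> j)"
  by (simp add: hA_def)

lemma hA_Some[simp]: "hA n a (Some i) \<alpha> = 0"
  by (simp add: hA_def)

lemma hA_nz: assumes "hA n a e \<alpha> \<noteq> 0"
  obtains j where "e = None" "j < n" "0 < \<alpha> j" "a (Some j) (\<alpha>(j := \<alpha> j - 1)) \<noteq> 0"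
proof -
  have e: "e = None" using assms by (cases e) auto
  hence "(\<Sum>j<n. if 0 < \<alpha> j then a (Some j) (\<alpha>(j := \<alpha> j - 1)) else 0) \<noteq> 0"
    using assms by (simp add: hA_None)
  then obtain j where "j \<in> {..<n}" "(if 0 < \<alpha> j then a (Some j) (\<alpha>(j := \<alpha> j - 1)) else 0) \<noteq> 0"
    by (rule sum.not_neutral_contains_not_neutral)
  moreover from this(2) have "0 < \<alpha> j" "a (Some j) (\<alpha>(j := \<alpha> j - 1)) \<noteq> 0" by (simp_all split: if_splits)
  ultimately show ?thesis using that e by simp
qed

lemma Aset_hA[simp]: assumes a: "a \<in> Aset n" shows "hA n a \<in> Aset n"
proof -
  have "{(e,\<alpha>). hA n a e \<alpha> \<noteq> 0} \<subseteq> (\<lambda>(e,\<gamma>). (None, \<gamma>(the e := Suc (\<gamma> (the e))))) ` {(e,\<gamma>). a e \<gamma> \<noteq> 0}"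
  proof (clarify)
    fix e \<alpha> assume "hA n a e \<alpha> \<noteq> 0"
    then obtain j where j: "e = None" "j < n" "0 < \<alpha> j" "a (Some j) (\<alpha>(j := \<alpha> j - 1)) \<noteq> 0"
      by (rule hA_nz)
    then show "(e,\<alpha>) \<in> (\<lambda>(e,\<gamma>). (None, \<gamma>(the e := Suc (\<gamma> (the e))))) ` {(e,\<gamma>). a e \<gamma> \<noteq> 0}"
      by (intro image_eqI[where x="(Some j, \<alpha>(j := \<alpha> j - 1))"]) auto
  qed
  moreover have fa: "finite {(e,\<alpha>). a e \<alpha> \<noteq> 0}" using a by (simp add: Aset_def)
  ultimately have fin: "finite {(e,\<alpha>). hA n a e \<alpha> \<noteq> 0}" by (meson finite_subset finite_imageI)
  have "\<forall>e \<alpha>. hA n a e \<alpha> \<noteq> 0 \<longrightarrow> (\<forall>j\<ge>n. \<alpha> j = 0) \<and> (\<forall>i. e = Some i \<longrightarrow> i < n)"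
  proof (intro allI impI)
    fix e \<alpha> assume "hA n a e \<alpha> \<noteq> 0"
    then obtain j where j: "e = None" "j < n" "0 < \<alpha> j" "a (Some j) (\<alpha>(j := \<alpha> j - 1)) \<noteq> 0"
      by (rule hA_nz)
    have "\<forall>j'\<ge>n. (\<alpha>(j := \<alpha> j - 1)) j' = 0" using a j(4) unfolding Aset_def by blast
    moreover have "\<forall>j'\<ge>n. j' \<noteq> j" using j(2) by auto
    ultimately show "(\<forall>j\<ge>n. \<alpha> j = 0) \<and> (\<forall>i. e = Some i \<longrightarrow> i < n)" using j
      by (auto split: if_splits)
  qed
  then show ?thesis using fin by (simp add: Aset_def)
qed

lemma Aset_PA[simp]: "a \<in> Aset n \<Longrightarrow> PA n a \<in> Aset n"
proof -
  assume a: "a \<in> Aset n"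
  have "PA n a = addA a (scaleA (-1) (addA (dA n (hA n a)) (hA n (dA n a))))"
    by (intro ext) (simp add: PA_def addA_def scaleA_def)
  then show ?thesis using a by simp
qed

lemma Aset_QA[simp]: "a \<in> Aset n \<Longrightarrow> QA n a \<in> Aset n"
  by (simp add: QA_def)




lemma elt_eqI: "(\<And>\<alpha>. a None \<alpha> = b None \<alpha>) \<Longrightarrow> (\<And>i \<alpha>. a (Some i) \<alpha> = b (Some i) \<alpha>) \<Longrightarrow> a = (b::elt)"
proof (intro ext)
  fix e \<alpha> assume "\<And>\<alpha>. a None \<alpha> = b None \<alpha>" "\<And>i \<alpha>. a (Some i) \<alpha> = b (Some i) \<alpha>"
  then show "a e \<alpha> = b e \<alpha>" by (cases e) simp_all
qed

lemma dA_None[simp]: "dA n a None \<alpha> = 0" by (simp add: dA_def)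
lemma dA_Some: "dA n a (Some j) \<alpha> = (if j<n then real (Suc (\<alpha> j)) * a None (\<alpha>(j := Suc (\<alpha> j))) else 0)"
  by (simp add: dA_def)
lemma sgnA_None[simp]: "sgnA a None \<alpha> = - a None \<alpha>" by (simp add: sgnA_def)
lemma sgnA_Some[simp]: "sgnA a (Some i) \<alpha> = a (Some i) \<alpha>" by (simp add: sgnA_def)
lemma addA_app[simp]: "addA a b e \<alpha> = a e \<alpha> + b e \<alpha>" by (simp add: addA_def)
lemma scaleA_app[simp]: "scaleA c a e \<alpha> = c * a e \<alpha>" by (simp add: scaleA_def)
lemma zeroA_app[simp]: "zeroA e \<alpha> = 0" by (simp add: zeroA_def)
lemma sumA_app[simp]: "sumA m F e \<alpha> = (\<Sum>i<m. F i e \<alpha>)" by (simp add: sumA_def)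
lemma PA_app: "PA n a e \<alpha> = a e \<alpha> - dA n (hA n a) e \<alpha> - hA n (dA n a) e \<alpha>" by (simp add: PA_def)
lemma PA_Some[simp]: "PA n a (Some i) \<alpha> = a (Some i) \<alpha> - dA n (hA n a) (Some i) \<alpha>" by (simp add: PA_def)

lemma sgn_sgn[simp]: "sgnA (sgnA a) = a" by (rule elt_eqI) simp_all
lemma hA_sgn[simp]: "hA n (sgnA a) = hA n a" by (rule elt_eqI) (simp_all add: hA_None cong: if_cong)
lemma dA_sgn: "dA n (sgnA a) = scaleA (-1) (dA n a)" by (rule elt_eqI) (simp_all add: dA_Some)
lemma dA_dA[simp]: "dA n (dA n a) = zeroA" by (rule elt_eqI) (simp_all add: dA_Some)
lemma hA_zeroA[simp]: "hA n zeroA = zeroA" by (rule elt_eqI) (simp_all add: hA_None cong: if_cong)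
lemma dA_zeroA[simp]: "dA n zeroA = zeroA" by (rule elt_eqI) (simp_all add: dA_Some)
lemma sgn_dA[simp]: "sgnA (dA n a) = dA n a" by (rule elt_eqI) simp_all
lemma sgn_hA: "sgnA (hA n a) = scaleA (-1) (hA n (sgnA a))" by (rule elt_eqI) simp_all

lemma hA_deg0: "(\<forall>i \<alpha>. a (Some i) \<alpha> = 0) \<Longrightarrow> hA n a = zeroA"
  by (rule elt_eqI) (simp_all add: hA_None cong: if_cong)
lemma dA_deg1: "(\<forall>\<alpha>. a None \<alpha> = 0) \<Longrightarrow> dA n a = zeroA"
  by (rule elt_eqI) (simp_all add: dA_Some)

definition lin :: "(elt \<Rightarrow> elt) \<Rightarrow> bool" where
  "lin T = (\<forall>r s b c. T (addA (scaleA r b) (scaleA s c)) = addA (scaleA r (T b)) (scaleA s (T c)))"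

lemma lin_id[simp]: "lin (\<lambda>x. x)" by (simp add: lin_def)
lemma lin_sgn[simp]: "lin sgnA" unfolding lin_def by (intro allI, rule elt_eqI) (simp_all add: algebra_simps)
lemma lin_dA[simp]: "lin (dA n)" unfolding lin_def by (intro allI, rule elt_eqI) (simp_all add: dA_Some algebra_simps)
lemma lin_hA[simp]: "lin (hA n)" unfolding lin_def
proof (intro allI, rule elt_eqI)
  fix r s :: real and b c :: elt and \<alpha> :: "nat \<Rightarrow> nat"
  let ?N = "real (\<Sum>j<n. \<alpha> j)"
  have "(\<Sum>j<n. if 0 < \<alpha> j then r * b (Some j) (\<alpha>(j := \<alpha> j - 1)) + s * c (Some j) (\<alpha>(j := \<alpha> j - 1)) else 0)
     = r * (\<Sum>j<n. if 0 < \<alpha> j then b (Some j) (\<alpha>(j := \<alpha> j - 1)) else 0) + s * (\<Sum>j<n. if 0 < \<alpha> j then c (Some j) (\<alpha>(j := \<alpha> j - 1)) else 0)"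
  proof -
    have "\<And>j. (if 0 < \<alpha> j then r * b (Some j) (\<alpha>(j := \<alpha> j - 1)) + s * c (Some j) (\<alpha>(j := \<alpha> j - 1)) else 0)
       = r * (if 0 < \<alpha> j then b (Some j) (\<alpha>(j := \<alpha> j - 1)) else 0) + s * (if 0 < \<alpha> j then c (Some j) (\<alpha>(j := \<alpha> j - 1)) else 0)"
      by (simp add: distrib_left)
    then show ?thesis by (simp only: sum.distrib sum_distrib_left)
  qed
  then show "hA n (addA (scaleA r b) (scaleA s c)) None \<alpha> = addA (scaleA r (hA n b)) (scaleA s (hA n c)) None \<alpha>"
    by (simp add: hA_None add_divide_distrib cong: if_cong)
qed simp
lemma lin_comp[simp]: "lin T \<Longrightarrow> lin U \<Longrightarrow> lin (\<lambda>x. T (U x))" by (simp add: lin_def)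
lemma lin_PA[simp]: "lin (PA n)" unfolding lin_def
proof (intro allI)
  fix r s b c
  have d: "dA n (addA (scaleA r b) (scaleA s c)) = addA (scaleA r (dA n b)) (scaleA s (dA n c))"
    using lin_dA[of n] unfolding lin_def by blast
  have h: "\<And>b c. hA n (addA (scaleA r b) (scaleA s c)) = addA (scaleA r (hA n b)) (scaleA s (hA n c))"
    using lin_hA[of n] unfolding lin_def by blast
  have d2: "\<And>b c. dA n (addA (scaleA r b) (scaleA s c)) = addA (scaleA r (dA n b)) (scaleA s (dA n c))"
    using lin_dA[of n] unfolding lin_def by blast
  show "PA n (addA (scaleA r b) (scaleA s c)) = addA (scaleA r (PA n b)) (scaleA s (PA n c))"
    unfolding PA_def d h d2 by (intro ext) (simp add: algebra_simps)
qed
lemma lin_QA[simp]: "lin (QA n)"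
proof -
  have "lin (\<lambda>x. sgnA (PA n x))" by simp
  then show ?thesis unfolding QA_def[abs_def] .
qed
lemma linD: "lin T \<Longrightarrow> T (addA (scaleA r b) (scaleA s c)) = addA (scaleA r (T b)) (scaleA s (T c))"
  by (simp add: lin_def)

lemma euler: assumes a: "a \<in> Aset n" and nz: "\<alpha> \<noteq> (\<lambda>_. 0)"
  shows "hA n (dA n a) None \<alpha> = a None \<alpha>"
proof -
  have t: "(if 0 < \<alpha> j then dA n a (Some j) (\<alpha>(j := \<alpha> j - 1)) else 0) = real (\<alpha> j) * a None \<alpha>" if "j < n" for j
  proof (cases "0 < \<alpha> j")
    case True
    then have "(\<alpha>(j := \<alpha> j - 1))(j := Suc (\<alpha> j - 1)) = \<alpha>" by auto
    then show ?thesis using True that by (simp add: dA_Some)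
  qed simp
  have "hA n (dA n a) None \<alpha> = (\<Sum>j<n. real (\<alpha> j) * a None \<alpha>) / real (\<Sum>j<n. \<alpha> j)"
    by (simp add: hA_None t)
  also have "\<dots> = real (\<Sum>j<n. \<alpha> j) * a None \<alpha> / real (\<Sum>j<n. \<alpha> j)"
    by (simp add: sum_distrib_right)
  also have "\<dots> = a None \<alpha>"
  proof (cases "(\<Sum>j<n. \<alpha> j) = 0")
    case True
    then have z: "\<forall>j<n. \<alpha> j = 0" by simp
    obtain j where "\<alpha> j \<noteq> 0" using nz by auto
    with z have "j \<ge> n" by (meson not_le)
    have "\<forall>e \<alpha>. a e \<alpha> \<noteq> 0 \<longrightarrow> (\<forall>j\<ge>n. \<alpha> j = 0) \<and> (\<forall>i. e = Some i \<longrightarrow> i < n)"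
      using a by (simp add: Aset_def)
    then have "a None \<alpha> \<noteq> 0 \<Longrightarrow> \<alpha> j = 0" using \<open>j \<ge> n\<close> by blast
    then have "a None \<alpha> = 0" using \<open>\<alpha> j \<noteq> 0\<close> by blast
    then show ?thesis by simp
  next
    case False
    then have "real (\<Sum>j<n. \<alpha> j) \<noteq> 0" by (simp only: of_nat_eq_0_iff not_False_eq_True)
    then show ?thesis by (rule nonzero_mult_div_cancel_left)
  qed
  finally show ?thesis .
qed

lemma PA_None_nz: "a \<in> Aset n \<Longrightarrow> \<alpha> \<noteq> (\<lambda>_. 0) \<Longrightarrow> PA n a None \<alpha> = 0"
  by (simp add: PA_app euler)

lemma PA_sgn: "PA n (sgnA a) = sgnA (PA n a)"
proof -
  have h: "hA n (scaleA (-1) x) = scaleA (-1) (hA n x)" for x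
    using linD[OF lin_hA[of n], of "-1" x 0 x] by (simp add: addA_def scaleA_def)
  show ?thesis unfolding PA_def dA_sgn h by (rule elt_eqI) (simp_all add: dA_Some)
qed

lemma SQ[simp]: "sgnA (QA n a) = PA n a" by (simp add: QA_def)
lemma QS: "QA n (sgnA a) = PA n a" by (simp add: QA_def PA_sgn)

lemma DQ: "dA n (QA n a) = scaleA (-1) (QA n (dA n a))"
proof (rule elt_eqI)
  fix i \<alpha>
  show "dA n (QA n a) (Some i) \<alpha> = scaleA (-1) (QA n (dA n a)) (Some i) \<alpha>"
    by (simp add: QA_def dA_Some PA_app algebra_simps)
qed (simp add: QA_def PA_app)

lemma unitA_Some[simp]: "unitA (Some i) \<alpha> = 0" by (simp add: unitA_def)
lemma unitA_None: "unitA None \<alpha> = (if \<alpha> = (\<lambda>_. 0) then 1 else 0)" by (simp add: unitA_def)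
lemma upd_Suc_nz[simp]: "\<alpha>(j := Suc k) \<noteq> (\<lambda>_. 0)"
proof
  assume "\<alpha>(j := Suc k) = (\<lambda>_. 0)"
  then have "(\<alpha>(j := Suc k)) j = 0" by simp
  then show False by simp
qed

lemma hA_unit[simp]: "hA n unitA = zeroA" by (rule hA_deg0) simp
lemma dA_unit[simp]: "dA n unitA = zeroA" by (rule elt_eqI) (simp_all add: dA_Some unitA_None)
lemma QA_unit: "QA n unitA = scaleA (-1) unitA"
  by (rule elt_eqI) (simp_all add: QA_def PA_app)

lemma decomp: "a = addA (PA n a) (addA (dA n (hA n a)) (hA n (dA n a)))"
  by (intro ext) (simp add: PA_app)

lemma is_hom_zero[simp]: "is_hom zeroA d" by (simp add: is_hom_def)
lemma is_hom_hA: "is_hom (hA n a) 0" by (simp add: is_hom_def)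
lemma is_hom_QA: assumes "is_hom a d" "d \<in> {0,1}" shows "is_hom (QA n a) d"
proof (cases "d = 0")
  case True
  then have a: "\<forall>i \<alpha>. a (Some i) \<alpha> = 0" using assms by (simp add: is_hom_def)
  then have "hA n a = zeroA" by (rule hA_deg0)
  then show ?thesis using True a by (simp add: is_hom_def QA_def)
next
  case False
  then have d: "d = 1" using assms by simp
  then have a: "\<forall>\<alpha>. a None \<alpha> = 0" using assms by (simp add: is_hom_def)
  then have "dA n a = zeroA" by (rule dA_deg1)
  then show ?thesis using d a by (simp add: is_hom_def QA_def PA_app)
qed

lemma is_hom_sumA: "(\<And>i. i < m \<Longrightarrow> is_hom (F i) d) \<Longrightarrow> is_hom (sumA m F) d"
proof -
  assume h: "\<And>i. i < m \<Longrightarrow> is_hom (F i) d"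
  show ?thesis
  proof (cases "d = 0")
    case True then show ?thesis using h by (simp add: is_hom_def)
  next
    case False
    show ?thesis
    proof (cases "d = 1")
      case True then show ?thesis using h by (simp add: is_hom_def)
    next
      case False
      then have "\<And>i. i < m \<Longrightarrow> F i = zeroA" using h \<open>d \<noteq> 0\<close> by (simp add: is_hom_def)
      then have "sumA m F = zeroA" by (intro ext) simp
      then show ?thesis by simp
    qed
  qed
qed




definition mk :: "nat \<Rightarrow> (nat \<Rightarrow> elt) \<Rightarrow> elt list" where "mk l T = map T [0..<l]"

lemma length_mk[simp]: "length (mk l T) = l" by (simp add: mk_def)
lemma nth_mk[simp]: "t < l \<Longrightarrow> mk l T ! t = T t" by (simp add: mk_def)
lemma mk_args: "(\<And>t. t < l \<Longrightarrow> T t \<in> Aset n) \<Longrightarrow> mk l T \<in> args n l"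
  by (auto simp: mk_def args_def)
lemma mk_cong: "(\<And>t. t < l \<Longrightarrow> T t = T' t) \<Longrightarrow> mk l T = mk l T'"
  by (simp add: mk_def)
lemma mk_upd: "i < l \<Longrightarrow> (mk l T)[i := x] = mk l (T(i := x))"
  by (rule nth_equalityI) (auto simp: nth_list_update)
lemma mk_in_set: "t < l \<Longrightarrow> T t \<in> set (mk l T)"
  by (simp add: mk_def)
lemma args_mk: "as \<in> args n l \<Longrightarrow> as = mk l (\<lambda>t. as ! t)"
  by (rule nth_equalityI) (auto simp: args_def)
lemma args_nth: "as \<in> args n l \<Longrightarrow> t < l \<Longrightarrow> as ! t \<in> Aset n"
  by (auto simp: args_def)

lemma sumA_cong: "(\<And>i. i < m \<Longrightarrow> F i = G i) \<Longrightarrow> sumA m F = sumA m G"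
  by (simp add: sumA_def)

lemma scaleA_zeroA[simp]: "scaleA c zeroA = zeroA" by (intro ext) simp
lemma addA_zeroA[simp]: "addA zeroA zeroA = zeroA" by (intro ext) simp
lemma sumA_zeroA: "(\<And>i. i < m \<Longrightarrow> F i = zeroA) \<Longrightarrow> sumA m F = zeroA"
  by (intro ext) simp

definition Dop :: "nat \<Rightarrow> nat \<Rightarrow> nat \<Rightarrow> elt \<Rightarrow> elt" where
  "Dop n j t = (if t < j then sgnA else if t = j then dA n else (\<lambda>x. x))"
definition Hop :: "nat \<Rightarrow> nat \<Rightarrow> nat \<Rightarrow> elt \<Rightarrow> elt" where
  "Hop n i t = (if t < i then QA n else if t = i then hA n else (\<lambda>x. x))"

lemma Aset_Dop[simp]: "x \<in> Aset n \<Longrightarrow> Dop n j t x \<in> Aset n" by (simp add: Dop_def)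
lemma Aset_Hop[simp]: "x \<in> Aset n \<Longrightarrow> Hop n i t x \<in> Aset n" by (simp add: Hop_def)
lemma lin_Hop[simp]: "lin (Hop n i t)" by (simp add: Hop_def)

lemma dB_mk: "dB n f as = sumA (length as) (\<lambda>j. f (mk (length as) (\<lambda>t. Dop n j t (as ! t))))"
  unfolding dB_def
proof (rule sumA_cong)
  fix j assume j: "j < length as"
  show "f (map sgnA (take j as) @ dA n (as ! j) # drop (Suc j) as) = f (mk (length as) (\<lambda>t. Dop n j t (as ! t)))"
  proof (rule arg_cong[where f=f], rule nth_equalityI)
    show "length (map sgnA (take j as) @ dA n (as ! j) # drop (Suc j) as) = length (mk (length as) (\<lambda>t. Dop n j t (as ! t)))"
      using j by simp
  next
    fix t assume "t < length (map sgnA (take j as) @ dA n (as ! j) # drop (Suc j) as)"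
    then have t: "t < length as" using j by simp
    show "(map sgnA (take j as) @ dA n (as ! j) # drop (Suc j) as) ! t = mk (length as) (\<lambda>t. Dop n j t (as ! t)) ! t"
    proof (cases "t < j")
      case True
      then show ?thesis using j t by (simp add: nth_append Dop_def)
    next
      case False
      then obtain u where u: "t = j + u" by (metis le_Suc_ex not_less)
      show ?thesis
      proof (cases u)
        case 0
        then show ?thesis using j t u by (simp add: nth_append Dop_def)
      next
        case (Suc v)
        then show ?thesis using j t u by (simp add: nth_append Dop_def)
      qed
    qed
  qed
qed

locale cocyc =
  fixes n l :: nat and k :: int and f :: "elt list \<Rightarrow> elt"
  assumes cf: "cochain n l k f" and nf: "normal n l f" and zf: "\<forall>as \<in> args n l. dB n f as = zeroA"
    and kpos: "k > 0"
begin

lemma ml: "multilinear n l f" using cf by (simp add: cochain_def)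

lemma f_Aset: "as \<in> args n l \<Longrightarrow> f as \<in> Aset n" using cf by (simp add: cochain_def)

lemma f_lin:
  assumes i: "i < l" and T: "\<And>t. t < l \<Longrightarrow> t \<noteq> i \<Longrightarrow> T t \<in> Aset n" and b: "b \<in> Aset n" and c: "c \<in> Aset n"
  shows "f (mk l (T(i := addA (scaleA r b) (scaleA s c)))) = addA (scaleA r (f (mk l (T(i := b))))) (scaleA s (f (mk l (T(i := c)))))"
proof -
  have as: "mk l (T(i := b)) \<in> args n l" using T b by (intro mk_args) auto
  have H: "\<forall>as\<in>args n l. \<forall>i<l. \<forall>b\<in>Aset n. \<forall>c\<in>Aset n. \<forall>r s.
     f (as[i := addA (scaleA r b) (scaleA s c)]) =
       addA (scaleA r (f (as[i := b]))) (scaleA s (f (as[i := c])))" using ml by (simp only: multilinear_def)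
  have "f ((mk l (T(i := b)))[i := addA (scaleA r b) (scaleA s c)]) =
       addA (scaleA r (f ((mk l (T(i := b)))[i := b]))) (scaleA s (f ((mk l (T(i := b)))[i := c])))"
    using H as i b c by blast
  then show ?thesis by (simp only: mk_upd[OF i] fun_upd_upd)
qed

lemma f_add:
  assumes "i < l" "\<And>t. t < l \<Longrightarrow> t \<noteq> i \<Longrightarrow> T t \<in> Aset n" "b \<in> Aset n" "c \<in> Aset n"
  shows "f (mk l (T(i := addA b c))) = addA (f (mk l (T(i := b)))) (f (mk l (T(i := c))))"
proof -
  have e: "\<And>x. scaleA 1 x = x" by (intro ext) simp
  show ?thesis using f_lin[OF assms, where r=1 and s=1] by (simp add: e)
qed

lemma f_scale:
  assumes "i < l" "\<And>t. t < l \<Longrightarrow> t \<noteq> i \<Longrightarrow> T t \<in> Aset n" "b \<in> Aset n"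
  shows "f (mk l (T(i := scaleA r b))) = scaleA r (f (mk l (T(i := b))))"
proof -
  have e: "\<And>x. addA (scaleA r x) (scaleA 0 b) = scaleA r x" by (intro ext) simp
  have e2: "\<And>x. addA (scaleA r x) (scaleA 0 y) = scaleA r x" for y by (intro ext) simp
  show ?thesis using f_lin[OF assms(1,2,3,3), where r=r and s=0] by (simp add: e e2)
qed

lemma f_zero:
  assumes "i < l" "\<And>t. t < l \<Longrightarrow> t \<noteq> i \<Longrightarrow> T t \<in> Aset n"
  shows "f (mk l (T(i := zeroA))) = zeroA"
proof -
  have "scaleA 0 zeroA = zeroA" by simp
  then have "f (mk l (T(i := zeroA))) = f (mk l (T(i := scaleA 0 zeroA)))" by simp
  also have "\<dots> = scaleA 0 (f (mk l (T(i := zeroA))))" using f_scale[OF assms Aset_zero] .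
  also have "\<dots> = zeroA" by (intro ext) simp
  finally show ?thesis .
qed

end




lemma sum_list_upd_int: "u < length ds \<Longrightarrow> sum_list (ds[u := x]) = sum_list ds - ds ! u + (x::int)"
proof (induction ds arbitrary: u)
  case Nil then show ?case by simp
next
  case (Cons a ds) then show ?case by (cases u) auto
qed

context cocyc begin

lemma vanish_aux:
  "\<forall>T. (\<forall>t<l. T t \<in> Aset n \<and> (\<forall>\<alpha>. \<alpha> \<noteq> (\<lambda>_. 0) \<longrightarrow> T t None \<alpha> = 0)) \<longrightarrow>
       (\<forall>t. m \<le> t \<and> t < l \<longrightarrow> (\<forall>\<alpha>. T t None \<alpha> = 0)) \<longrightarrow> f (mk l T) = zeroA"
proof (induction m)
  case 0
  show ?case
  proof (intro allI impI)
    fix T assume g: "\<forall>t<l. T t \<in> Aset n \<and> (\<forall>\<alpha>. \<alpha> \<noteq> (\<lambda>_. 0) \<longrightarrow> T t None \<alpha> = 0)"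
      and d: "\<forall>t. 0 \<le> t \<and> t < l \<longrightarrow> (\<forall>\<alpha>. T t None \<alpha> = 0)"
    have as: "mk l T \<in> args n l" using g by (intro mk_args) auto
    let ?ds = "replicate l (1::int)"
    have H: "\<forall>as \<in> args n l. \<forall>ds. length ds = l \<and> set ds \<subseteq> {0, 1} \<and>
        (\<forall>i<l. is_hom (as ! i) (ds ! i)) \<longrightarrow>
        is_hom (f as) (sum_list ds - int l + k + 1)" using cf unfolding cochain_def by (rule conjunct2[OF conjunct2])
    have "\<forall>i<l. is_hom (mk l T ! i) (?ds ! i)" using d by (simp add: is_hom_def)
    moreover have "set ?ds \<subseteq> {0,1}" by auto
    moreover have "length ?ds = l" by simp
    ultimately have "length ?ds = l \<and> set ?ds \<subseteq> {0,1} \<and> (\<forall>i<l. is_hom (mk l T ! i) (?ds ! i))" by simp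
    then have "is_hom (f (mk l T)) (sum_list ?ds - int l + k + 1)" by (rule mp[OF spec[OF bspec[OF H as], of ?ds]])
    moreover have "sum_list ?ds - int l + k + 1 = k + 1" by (simp add: sum_list_replicate)
    ultimately show "f (mk l T) = zeroA" using kpos by (simp add: is_hom_def)
  qed
next
  case (Suc m)
  show ?case
  proof (intro allI impI)
    fix T assume g: "\<forall>t<l. T t \<in> Aset n \<and> (\<forall>\<alpha>. \<alpha> \<noteq> (\<lambda>_. 0) \<longrightarrow> T t None \<alpha> = 0)"
      and d: "\<forall>t. Suc m \<le> t \<and> t < l \<longrightarrow> (\<forall>\<alpha>. T t None \<alpha> = 0)"
    show "f (mk l T) = zeroA"
    proof (cases "m < l")
      case False
      then have "\<forall>t. m \<le> t \<and> t < l \<longrightarrow> (\<forall>\<alpha>. T t None \<alpha> = 0)" by auto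
      then show ?thesis by (rule mp[OF mp[OF spec[OF Suc.IH, of T] g]])
    next
      case True
      define c where "c = T m None (\<lambda>_. 0)"
      define w :: elt where "w = (\<lambda>e \<alpha>. if e = None then 0 else T m e \<alpha>)"
      have Tm: "T m \<in> Aset n" using g True by simp
      have w: "w \<in> Aset n" by (rule Aset_supp[OF Tm Tm]) (simp add: w_def)
      have dec: "T m = addA (scaleA c unitA) (scaleA 1 w)"
      proof (rule elt_eqI)
        fix \<alpha> show "T m None \<alpha> = addA (scaleA c unitA) (scaleA 1 w) None \<alpha>"
          using g True by (simp add: c_def w_def unitA_None)
      qed (simp add: w_def)
      have oth: "\<And>t. t < l \<Longrightarrow> t \<noteq> m \<Longrightarrow> T t \<in> Aset n" using g by simp
      have "f (mk l T) = f (mk l (T(m := addA (scaleA c unitA) (scaleA 1 w))))"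
        by (simp only: dec[symmetric] fun_upd_triv)
      also have "\<dots> = addA (scaleA c (f (mk l (T(m := unitA))))) (scaleA 1 (f (mk l (T(m := w)))))"
        by (rule f_lin[OF True oth Aset_unit w])
      also have "f (mk l (T(m := unitA))) = zeroA"
      proof -
        have "mk l (T(m := unitA)) \<in> args n l" using oth True by (intro mk_args) auto
        moreover have "unitA \<in> set (mk l (T(m := unitA)))" using mk_in_set[OF True, of "T(m := unitA)"] by simp
        ultimately show ?thesis using nf by (simp add: normal_def)
      qed
      also have "f (mk l (T(m := w))) = zeroA"
      proof -
        have "\<forall>t<l. (T(m := w)) t \<in> Aset n \<and> (\<forall>\<alpha>. \<alpha> \<noteq> (\<lambda>_. 0) \<longrightarrow> (T(m := w)) t None \<alpha> = 0)"
          using g w by (simp add: w_def)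
        moreover have "\<forall>t. m \<le> t \<and> t < l \<longrightarrow> (\<forall>\<alpha>. (T(m := w)) t None \<alpha> = 0)"
          using d by (auto simp: w_def)
        ultimately show ?thesis by (rule mp[OF mp[OF spec[OF Suc.IH, of "T(m := w)"]]])
      qed
      finally show ?thesis by (intro ext) simp
    qed
  qed
qed

lemma vanish_P: "(\<And>t. t < l \<Longrightarrow> A t \<in> Aset n) \<Longrightarrow> f (mk l (\<lambda>t. PA n (A t))) = zeroA"
proof -
  assume A: "\<And>t. t < l \<Longrightarrow> A t \<in> Aset n"
  have 1: "\<forall>t<l. PA n (A t) \<in> Aset n \<and> (\<forall>\<alpha>. \<alpha> \<noteq> (\<lambda>_. 0) \<longrightarrow> PA n (A t) None \<alpha> = 0)"
    using A by (simp add: PA_None_nz)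
  have 2: "\<forall>t. l \<le> t \<and> t < l \<longrightarrow> (\<forall>\<alpha>. PA n (A t) None \<alpha> = 0)" by auto
  note 3 = spec[OF vanish_aux[of l], of "\<lambda>t. PA n (A t)"]
  show ?thesis by (rule mp[OF mp[OF 3 1] 2])
qed

definition G :: "elt list \<Rightarrow> elt" where
  "G X = sumA (length X) (\<lambda>i. f (mk (length X) (\<lambda>t. Hop n i t (X ! t))))"

lemma G_mk: "G (mk l X) = sumA l (\<lambda>i. f (mk l (\<lambda>t. Hop n i t (X t))))"
proof -
  have "mk l (\<lambda>t. Hop n i t (mk l X ! t)) = mk l (\<lambda>t. Hop n i t (X t))" for i
    by (rule mk_cong) simp
  then show ?thesis unfolding G_def length_mk by simp
qed

end



lemma Hop_lt: "t < i \<Longrightarrow> Hop n i t = QA n" by (simp add: Hop_def)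
lemma Hop_eq[simp]: "Hop n i i = hA n" by (simp add: Hop_def)
lemma Hop_gt: "i < t \<Longrightarrow> Hop n i t x = x" by (simp add: Hop_def)
lemma Dop_lt: "t < j \<Longrightarrow> Dop n j t = sgnA" by (simp add: Dop_def)
lemma Dop_eq[simp]: "Dop n j j = dA n" by (simp add: Dop_def)
lemma Dop_gt: "j < t \<Longrightarrow> Dop n j t x = x" by (simp add: Dop_def)

context cocyc begin

lemma pair:
  assumes A: "\<And>t. t < l \<Longrightarrow> A t \<in> Aset n" and i: "i < l" and j: "j < l"
  shows "addA (f (mk l (\<lambda>t. Hop n i t (Dop n j t (A t))))) (f (mk l (\<lambda>t. Dop n j t (Hop n i t (A t))))) =
    (if i = j then addA (f (mk l (\<lambda>t. if t < i then PA n (A t) else A t)))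
                        (scaleA (-1) (f (mk l (\<lambda>t. if t < Suc i then PA n (A t) else A t))))
     else zeroA)"
proof (cases i j rule: linorder_cases)
  case less
  define R where "R = (\<lambda>t. Hop n i t (Dop n j t (A t)))"
  have RA: "\<And>t. t < l \<Longrightarrow> R t \<in> Aset n" using A by (simp add: R_def)
  have "mk l (\<lambda>t. Dop n j t (Hop n i t (A t))) = mk l (R(i := scaleA (-1) (R i)))"
  proof (rule mk_cong)
    fix t assume "t < l"
    show "Dop n j t (Hop n i t (A t)) = (R(i := scaleA (-1) (R i))) t"
    proof (cases t i rule: linorder_cases)
      case less
      then show ?thesis using \<open>i < j\<close> by (simp add: R_def Hop_lt Dop_lt QS)
    next
      case equal
      then show ?thesis using \<open>i < j\<close> by (simp add: R_def Dop_lt sgn_hA)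
    next
      case greater
      then show ?thesis by (simp add: R_def Hop_gt)
    qed
  qed
  also have "f \<dots> = scaleA (-1) (f (mk l (R(i := R i))))"
    using f_scale[OF i, of R "R i" "-1"] RA i by simp
  finally show ?thesis using less unfolding R_def[symmetric] by (intro ext) simp
next
  case greater
  define R where "R = (\<lambda>t. Hop n i t (Dop n j t (A t)))"
  have RA: "\<And>t. t < l \<Longrightarrow> R t \<in> Aset n" using A by (simp add: R_def)
  have "mk l (\<lambda>t. Dop n j t (Hop n i t (A t))) = mk l (R(j := scaleA (-1) (R j)))"
  proof (rule mk_cong)
    fix t assume "t < l"
    show "Dop n j t (Hop n i t (A t)) = (R(j := scaleA (-1) (R j))) t"
    proof (cases t j rule: linorder_cases)
      case less
      then show ?thesis using \<open>j < i\<close> by (simp add: R_def Hop_lt Dop_lt QS)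
    next
      case equal
      then show ?thesis using \<open>j < i\<close> by (simp add: R_def Hop_lt DQ)
    next
      case greater
      then show ?thesis by (simp add: R_def Dop_gt)
    qed
  qed
  also have "f \<dots> = scaleA (-1) (f (mk l (R(j := R j))))"
    using f_scale[OF j, of R "R j" "-1"] RA j by simp
  finally show ?thesis using greater unfolding R_def[symmetric] by (intro ext) simp
next
  case equal
  define B where "B = (\<lambda>t. if t < i then PA n (A t) else A t)"
  have BA: "\<And>t. t < l \<Longrightarrow> B t \<in> Aset n" using A by (simp add: B_def)
  have Ai: "A i \<in> Aset n" using A i by simp
  have "f (mk l B) = f (mk l (B(i := addA (PA n (A i)) (addA (dA n (hA n (A i))) (hA n (dA n (A i)))))))"
  proof -
    have "B i = A i" by (simp add: B_def)
    then have "B(i := A i) = B" by (simp add: fun_upd_idem)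
    then show ?thesis by (simp only: decomp[where a="A i" and n=n, symmetric])
  qed
  also have "\<dots> = addA (f (mk l (B(i := PA n (A i)))))
      (addA (f (mk l (B(i := dA n (hA n (A i)))))) (f (mk l (B(i := hA n (dA n (A i)))))))"
    using f_add[OF i, of B] f_add[OF i, of B "dA n (hA n (A i))" "hA n (dA n (A i))"] BA Ai by simp
  also have "mk l (B(i := PA n (A i))) = mk l (\<lambda>t. if t < Suc i then PA n (A t) else A t)"
    by (rule mk_cong) (simp add: B_def)
  also have "mk l (B(i := dA n (hA n (A i)))) = mk l (\<lambda>t. Dop n j t (Hop n i t (A t)))"
  proof (rule mk_cong)
    fix t assume "t < l"
    show "(B(i := dA n (hA n (A i)))) t = Dop n j t (Hop n i t (A t))"
      using equal by (cases t i rule: linorder_cases) (simp_all add: B_def Hop_lt Dop_lt Hop_gt Dop_gt)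
  qed
  also have "mk l (B(i := hA n (dA n (A i)))) = mk l (\<lambda>t. Hop n i t (Dop n j t (A t)))"
  proof (rule mk_cong)
    fix t assume "t < l"
    show "(B(i := hA n (dA n (A i)))) t = Hop n i t (Dop n j t (A t))"
      using equal by (cases t i rule: linorder_cases) (simp_all add: B_def Hop_lt Dop_lt Hop_gt Dop_gt QS)
  qed
  finally show ?thesis using equal unfolding B_def[symmetric] by (intro ext) simp
qed

end



context cocyc begin

lemma dB_G:
  assumes as: "as \<in> args n l"
  shows "dB n G as = f as"
proof -
  define A where "A = (\<lambda>t. as ! t)"
  have len: "length as = l" using as by (simp add: args_def)
  have asA: "as = mk l A" unfolding A_def by (rule args_mk[OF as])
  have AA: "\<And>t. t < l \<Longrightarrow> A t \<in> Aset n" unfolding A_def using as by (rule args_nth)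
  define HD where "HD = (\<lambda>i j. f (mk l (\<lambda>t. Hop n i t (Dop n j t (A t)))))"
  define DH where "DH = (\<lambda>i j. f (mk l (\<lambda>t. Dop n j t (Hop n i t (A t)))))"
  define Tm where "Tm = (\<lambda>i. f (mk l (\<lambda>t. if t < i then PA n (A t) else A t)))"
  have 1: "dB n G as = sumA l (\<lambda>j. sumA l (\<lambda>i. HD i j))"
  proof -
    have "dB n G as = sumA l (\<lambda>j. G (mk l (\<lambda>t. Dop n j t (as ! t))))" by (simp only: dB_mk len)
    also have "\<dots> = sumA l (\<lambda>j. sumA l (\<lambda>i. HD i j))" by (simp only: G_mk HD_def A_def)
    finally show ?thesis .
  qed
  have 2: "sumA l (\<lambda>j. DH i j) = zeroA" if i: "i < l" for i
  proof -
    have m: "mk l (\<lambda>t. Hop n i t (A t)) \<in> args n l" using AA by (intro mk_args) simp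
    have "sumA l (\<lambda>j. DH i j) = dB n f (mk l (\<lambda>t. Hop n i t (A t)))"
    proof -
      have "\<And>j. mk l (\<lambda>t. Dop n j t (mk l (\<lambda>t. Hop n i t (A t)) ! t)) = mk l (\<lambda>t. Dop n j t (Hop n i t (A t)))"
        by (rule mk_cong) simp
      then show ?thesis unfolding dB_mk length_mk DH_def by simp
    qed
    also have "\<dots> = zeroA" using zf m by blast
    finally show ?thesis .
  qed
  have p: "HD i j e \<alpha> = (if i = j then Tm i e \<alpha> - Tm (Suc i) e \<alpha> else 0) - DH i j e \<alpha>"
    if "i < l" "j < l" for i j e \<alpha>
  proof -
    have "addA (HD i j) (DH i j) e \<alpha> = (if i = j then addA (Tm i) (scaleA (-1) (Tm (Suc i))) else zeroA) e \<alpha>"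
      unfolding HD_def DH_def Tm_def using pair[OF AA that] by simp
    then show ?thesis by (cases "i = j") simp_all
  qed
  have T0: "Tm 0 = f as" unfolding Tm_def asA by simp
  have Tl: "Tm l = zeroA"
  proof -
    have "mk l (\<lambda>t. if t < l then PA n (A t) else A t) = mk l (\<lambda>t. PA n (A t))" by (rule mk_cong) simp
    then show ?thesis unfolding Tm_def using vanish_P[OF AA] by simp
  qed
  show ?thesis
  proof (intro ext)
    fix e \<alpha>
    have "dB n G as e \<alpha> = (\<Sum>j<l. \<Sum>i<l. HD i j e \<alpha>)" unfolding 1 by simp
    also have "\<dots> = (\<Sum>i<l. \<Sum>j<l. HD i j e \<alpha>)" by (rule sum.swap)
    also have "\<dots> = (\<Sum>i<l. \<Sum>j<l. (if i = j then Tm i e \<alpha> - Tm (Suc i) e \<alpha> else 0) - DH i j e \<alpha>)"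
      by (rule sum.cong[OF refl], rule sum.cong[OF refl]) (simp add: p)
    also have "\<dots> = (\<Sum>i<l. (Tm i e \<alpha> - Tm (Suc i) e \<alpha>) - (\<Sum>j<l. DH i j e \<alpha>))"
      by (rule sum.cong[OF refl]) (simp add: sum_subtractf)
    also have "\<dots> = (\<Sum>i<l. Tm i e \<alpha> - Tm (Suc i) e \<alpha>)"
    proof (rule sum.cong[OF refl])
      fix i assume "i \<in> {..<l}"
      then have "sumA l (\<lambda>j. DH i j) e \<alpha> = 0" using 2 by simp
      then show "Tm i e \<alpha> - Tm (Suc i) e \<alpha> - (\<Sum>j<l. DH i j e \<alpha>) = Tm i e \<alpha> - Tm (Suc i) e \<alpha>" by simp
    qed
    also have "\<dots> = Tm 0 e \<alpha> - Tm l e \<alpha>" by (rule sum_lessThan_telescope')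
    also have "\<dots> = f as e \<alpha>" using T0 Tl by simp
    finally show "dB n G as e \<alpha> = f as e \<alpha>" .
  qed
qed

lemma G_args: "as \<in> args n l \<Longrightarrow> G as = sumA l (\<lambda>i. f (mk l (\<lambda>t. Hop n i t (as ! t))))"
  by (simp add: G_def args_def)

lemma G_normal: "normal n l G"
  unfolding normal_def
proof (intro ballI impI)
  fix as assume as: "as \<in> args n l" and u: "unitA \<in> set as"
  define A where "A = (\<lambda>t. as ! t)"
  have AA: "\<And>t. t < l \<Longrightarrow> A t \<in> Aset n" unfolding A_def using as by (rule args_nth)
  have len: "length as = l" using as by (simp add: args_def)
  obtain j where j: "j < l" "A j = unitA" using u len unfolding A_def by (auto simp: in_set_conv_nth)
  have "G as = sumA l (\<lambda>i. f (mk l (\<lambda>t. Hop n i t (A t))))" unfolding A_def by (rule G_args[OF as])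
  also have "\<dots> = zeroA"
  proof (rule sumA_zeroA)
    fix i assume i: "i < l"
    define R where "R = (\<lambda>t. Hop n i t (A t))"
    have RA: "\<And>t. t < l \<Longrightarrow> R t \<in> Aset n" using AA by (simp add: R_def)
    have mR: "mk l R \<in> args n l" using RA by (rule mk_args)
    have nz: "\<And>X. X \<in> args n l \<Longrightarrow> unitA \<in> set X \<Longrightarrow> f X = zeroA" using nf by (simp add: normal_def)
    show "f (mk l (\<lambda>t. Hop n i t (A t))) = zeroA"
    proof (cases i j rule: linorder_cases)
      case less
      then have "R j = unitA" using j by (simp add: R_def Hop_gt)
      then have "unitA \<in> set (mk l R)" using mk_in_set[OF j(1), of R] by simp
      then show ?thesis using nz mR unfolding R_def by blast
    next
      case equal
      then have "mk l R = mk l (R(j := zeroA))" using j by (intro mk_cong) (simp add: R_def)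
      then show ?thesis using f_zero[OF j(1), of R] RA unfolding R_def by simp
    next
      case greater
      then have "mk l R = mk l (R(j := scaleA (-1) unitA))" using j by (intro mk_cong) (simp add: R_def Hop_lt QA_unit)
      moreover have "f (mk l (R(j := scaleA (-1) unitA))) = scaleA (-1) (f (mk l (R(j := unitA))))"
        using f_scale[OF j(1), of R unitA "-1"] RA by simp
      moreover have "f (mk l (R(j := unitA))) = zeroA"
      proof -
        have "mk l (R(j := unitA)) \<in> args n l" using RA by (intro mk_args) simp
        moreover have "unitA \<in> set (mk l (R(j := unitA)))" using mk_in_set[OF j(1), of "R(j := unitA)"] by simp
        ultimately show ?thesis using nz by blast
      qed
      ultimately show ?thesis unfolding R_def by simp
    qed
  qed
  finally show "G as = zeroA" .
qed

end



lemma sumA_lin: "sumA m (\<lambda>u. addA (scaleA r (X u)) (scaleA s (Y u))) = addA (scaleA r (sumA m X)) (scaleA s (sumA m Y))"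
  by (intro ext) (simp add: sum.distrib sum_distrib_left)

context cocyc begin

lemma G_upd:
  assumes as: "as \<in> args n l" and i: "i < l"
  shows "G (as[i := y]) = sumA l (\<lambda>u. f (mk l ((\<lambda>t. Hop n u t (as ! t))(i := Hop n u i y))))"
proof -
  have len: "length as = l" using as by (simp add: args_def)
  have "\<And>u. mk l (\<lambda>t. Hop n u t (as[i := y] ! t)) = mk l ((\<lambda>t. Hop n u t (as ! t))(i := Hop n u i y))"
    by (rule mk_cong) (simp add: nth_list_update len)
  then show ?thesis by (simp add: G_def len)
qed

lemma G_ml: "multilinear n l G"
  unfolding multilinear_def
proof (intro ballI allI impI)
  fix as i b c r s assume as: "as \<in> args n l" and i: "i < l" and b: "b \<in> Aset n" and c: "c \<in> Aset n"
  define R where "R = (\<lambda>u t. Hop n u t (as ! t))"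
  have RA: "\<And>u t. t < l \<Longrightarrow> R u t \<in> Aset n" using as by (simp add: R_def args_nth)
  have "G (as[i := addA (scaleA r b) (scaleA s c)]) = sumA l (\<lambda>u. f (mk l ((R u)(i := Hop n u i (addA (scaleA r b) (scaleA s c))))))"
    unfolding R_def by (rule G_upd[OF as i])
  also have "\<dots> = sumA l (\<lambda>u. addA (scaleA r (f (mk l ((R u)(i := Hop n u i b))))) (scaleA s (f (mk l ((R u)(i := Hop n u i c))))))"
  proof (rule sumA_cong)
    fix u assume "u < l"
    have "Hop n u i (addA (scaleA r b) (scaleA s c)) = addA (scaleA r (Hop n u i b)) (scaleA s (Hop n u i c))"
      by (rule linD[OF lin_Hop])
    then show "f (mk l ((R u)(i := Hop n u i (addA (scaleA r b) (scaleA s c))))) =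
      addA (scaleA r (f (mk l ((R u)(i := Hop n u i b))))) (scaleA s (f (mk l ((R u)(i := Hop n u i c)))))"
      using f_lin[OF i, of "R u" "Hop n u i b" "Hop n u i c" r s] RA b c by simp
  qed
  also have "\<dots> = addA (scaleA r (G (as[i := b]))) (scaleA s (G (as[i := c])))"
    unfolding G_upd[OF as i] R_def by (rule sumA_lin)
  finally show "G (as[i := addA (scaleA r b) (scaleA s c)]) = addA (scaleA r (G (as[i := b]))) (scaleA s (G (as[i := c])))" .
qed

lemma G_deg:
  assumes as: "as \<in> args n l" and ds: "length ds = l" "set ds \<subseteq> {0, 1}" and h: "\<forall>i<l. is_hom (as ! i) (ds ! i)"
  shows "is_hom (G as) (sum_list ds - int l + (k - 1) + 1)"
proof -
  have H: "\<forall>as \<in> args n l. \<forall>ds. length ds = l \<and> set ds \<subseteq> {0, 1} \<and>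
        (\<forall>i<l. is_hom (as ! i) (ds ! i)) \<longrightarrow>
        is_hom (f as) (sum_list ds - int l + k + 1)" using cf unfolding cochain_def by (rule conjunct2[OF conjunct2])
  have AA: "\<And>t. t < l \<Longrightarrow> as ! t \<in> Aset n" using as by (rule args_nth)
  have dsin: "\<And>t. t < l \<Longrightarrow> ds ! t \<in> {0,1}" using ds by (metis nth_mem subsetD)
  show ?thesis unfolding G_args[OF as]
  proof (rule is_hom_sumA)
    fix u assume u: "u < l"
    define R where "R = (\<lambda>t. Hop n u t (as ! t))"
    have RA: "\<And>t. t < l \<Longrightarrow> R t \<in> Aset n" using AA by (simp add: R_def)
    have mR: "mk l R \<in> args n l" using RA by (rule mk_args)
    show "is_hom (f (mk l (\<lambda>t. Hop n u t (as ! t)))) (sum_list ds - int l + (k - 1) + 1)"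
    proof (cases "ds ! u = 0")
      case True
      then have "\<forall>i \<alpha>. (as ! u) (Some i) \<alpha> = 0" using h u by (simp add: is_hom_def)
      then have "hA n (as ! u) = zeroA" by (rule hA_deg0)
      then have "mk l R = mk l (R(u := zeroA))" by (intro mk_cong) (simp add: R_def)
      then have "f (mk l R) = zeroA" using f_zero[OF u, of R] RA by simp
      then show ?thesis unfolding R_def[symmetric] by simp
    next
      case False
      then have du: "ds ! u = 1" using dsin[OF u] by simp
      define ds' where "ds' = ds[u := 0]"
      have "length ds' = l" using ds by (simp add: ds'_def)
      moreover have "set ds' \<subseteq> {0,1}" using ds unfolding ds'_def by (meson insert_subset set_update_subset_insert subset_trans zero_int_def insertI1 ) 
      moreover have "\<forall>t<l. is_hom (mk l R ! t) (ds' ! t)"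
      proof (intro allI impI)
        fix t assume t: "t < l"
        show "is_hom (mk l R ! t) (ds' ! t)"
        proof (cases t u rule: linorder_cases)
          case less
          then show ?thesis using t h dsin[OF t] ds by (simp add: R_def Hop_lt ds'_def is_hom_QA)
        next
          case equal
          then show ?thesis using t ds by (simp add: R_def ds'_def is_hom_hA)
        next
          case greater
          then show ?thesis using t h ds by (simp add: R_def Hop_gt ds'_def)
        qed
      qed
      ultimately have "length ds' = l \<and> set ds' \<subseteq> {0,1} \<and> (\<forall>t<l. is_hom (mk l R ! t) (ds' ! t))" by simp
      then have "is_hom (f (mk l R)) (sum_list ds' - int l + k + 1)" by (rule mp[OF spec[OF bspec[OF H mR], of ds']])
      moreover have "sum_list ds' = sum_list ds - 1" using sum_list_upd_int[of u ds 0] ds u du by (simp add: ds'_def)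
      ultimately show ?thesis unfolding R_def by (simp add: algebra_simps)
    qed
  qed
qed

lemma G_cochain: "cochain n l (k - 1) G"
  unfolding cochain_def
proof (intro conjI ballI allI impI)
  fix as assume as: "as \<in> args n l"
  have "\<And>i. i < l \<Longrightarrow> mk l (\<lambda>t. Hop n i t (as ! t)) \<in> args n l" using as by (intro mk_args) (simp add: args_nth)
  then show "G as \<in> Aset n" unfolding G_args[OF as] by (intro Aset_sumA) (simp add: f_Aset)
next
  show "multilinear n l G" by (rule G_ml)
next
  fix as ds assume "as \<in> args n l" and "length ds = l \<and> set ds \<subseteq> {0, 1} \<and> (\<forall>i<l. is_hom (as ! i) (ds ! i))"
  then show "is_hom (G as) (sum_list ds - int l + (k - 1) + 1)" using G_deg by blast
qed

end

theorem mainTheorem4: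
  fixes n l :: nat and \<theta> \<theta>' :: "nat \<Rightarrow> nat \<Rightarrow> real" and k :: int
  assumes "antisym_mat n \<theta>" and "antisym_mat n \<theta>'" and "l \<ge> 1" and "k > 0"
  shows "\<forall>f. cochain n l k f \<and> normal n l f \<and> (\<forall>as \<in> args n l. dB n f as = zeroA) \<longrightarrow>
           (\<exists>g. cochain n l (k - 1) g \<and> normal n l g \<and> (\<forall>as \<in> args n l. dB n g as = f as))"
proof (intro allI impI)
  fix f assume H: "cochain n l k f \<and> normal n l f \<and> (\<forall>as \<in> args n l. dB n f as = zeroA)"
  then interpret cocyc n l k f using assms(4) by unfold_locales auto
  show "\<exists>g. cochain n l (k - 1) g \<and> normal n l g \<and> (\<forall>as \<in> args n l. dB n g as = f as)"
    using G_cochain G_normal dB_G by blast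
qed



end
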